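(* Let $W\in\mathcal A$ be a $\phi$-Lyapunov function ($W\ge1$, $\phi:\mathbb R^+\to(0,\infty)$ $\mathcal C^1$ increasing, $LW\le-\phi(W)+b\mathbf 1_K$ for some $K\subset E$, $b\ge0$), and assume $\mu$ satisfies a local Poincaré inequality on some $U\supseteq K$ with constant $\kappa_U$. Then for any $g\in\mathcal A$, $$\inf_{c\in\mathbb R}\int(g-c)^2\,\frac{\phi(W)}{W}\,d\mu\le(1+b\kappa_U)\int\Gamma(g)\,d\mu .$$
   Context: Standing framework: $E$ Polish, $\mu$ a probability measure, $L$ a $\mu$-symmetric diffusion operator with algebra $\mathcal A$ of bounded functions (containing constants, dense in the domain of $L$), carré du champ $\Gamma(f,g)=\frac12(L(fg)-fLg-gLf)$, $\Gamma(f)=\Gamma(f,f)$, a derivation satisfying the chain rule, with $\int\Gamma(f,g)d\mu=-\int fLg\,d\mu$. Local Poincaré inequality on $U$ with constant $\kappa_U$: for all $f\in\mathcal A$, $\int_Uf^2d\mu\le\kappa_U\int_E\Gamma(f)d\mu+\frac1{\mu(U)}(\int_Uf\,d\mu)^2$. All integrations by parts are assumed justified. *)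

theory Defs
  imports "HOL-Probability.Probability"
begin

definition smooth_fun :: "(real \<Rightarrow> real) \<Rightarrow> bool" where
  "smooth_fun \<psi> \<longleftrightarrow>
     (\<exists>d :: nat \<Rightarrow> real \<Rightarrow> real. d 0 = \<psi> \<and>
        (\<forall>n x. (d n has_real_derivative d (Suc n) x) (at x)))"

definition carre :: "(('a \<Rightarrow> real) \<Rightarrow> ('a \<Rightarrow> real)) \<Rightarrow> ('a \<Rightarrow> real) \<Rightarrow> ('a \<Rightarrow> real) \<Rightarrow> 'a \<Rightarrow> real" where
  "carre L f g = (\<lambda>x. (L (\<lambda>y. f y * g y) x - f x * L g x - g x * L f x) / 2)"

definition diffusion_setting ::
  "'a::topological_space measure \<Rightarrow> ('a \<Rightarrow> real) set \<Rightarrow> (('a \<Rightarrow> real) \<Rightarrow> ('a \<Rightarrow> real)) \<Rightarrow> bool" where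
  "diffusion_setting M A L \<longleftrightarrow>
     prob_space M \<and> sets M = sets borel \<and>
     (\<forall>c. (\<lambda>_. c) \<in> A) \<and>
     (\<forall>f\<in>A. \<forall>g\<in>A. (\<lambda>x. f x + g x) \<in> A \<and> (\<lambda>x. f x * g x) \<in> A) \<and>
     (\<forall>f\<in>A. \<forall>c. (\<lambda>x. c * f x) \<in> A) \<and>
     (\<forall>f\<in>A. f \<in> borel_measurable M \<and> (\<exists>B. \<forall>x. \<bar>f x\<bar> \<le> B)) \<and>
     (\<forall>f\<in>A. L f \<in> borel_measurable M \<and> integrable M (L f)) \<and>
     (\<forall>f\<in>A. \<forall>g\<in>A. L (\<lambda>x. f x + g x) = (\<lambda>x. L f x + L g x)) \<and>
     (\<forall>f\<in>A. \<forall>c. L (\<lambda>x. c * f x) = (\<lambda>x. c * L f x)) \<and>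
     (\<forall>f\<in>A. \<forall>g\<in>A. (\<integral>x. f x * L g x \<partial>M) = (\<integral>x. g x * L f x \<partial>M)) \<and>
     (\<forall>f\<in>A. \<forall>g\<in>A. (\<integral>x. carre L f g x \<partial>M) = - (\<integral>x. f x * L g x \<partial>M)) \<and>
     (\<forall>f\<in>A. \<forall>x. carre L f f x \<ge> 0) \<and>
     (\<forall>f\<in>A. \<forall>g\<in>A. \<forall>h\<in>A. \<forall>x.
        carre L (\<lambda>y. f y * g y) h x = f x * carre L g h x + g x * carre L f h x) \<and>
     (\<forall>f\<in>A. \<forall>\<psi>. smooth_fun \<psi> \<longrightarrow>
        (\<psi> \<circ> f) \<in> A \<and>
        (\<forall>g\<in>A. \<forall>x. carre L (\<psi> \<circ> f) g x = deriv \<psi> (f x) * carre L f g x))"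

definition local_poincare ::
  "'a measure \<Rightarrow> ('a \<Rightarrow> real) set \<Rightarrow> (('a \<Rightarrow> real) \<Rightarrow> ('a \<Rightarrow> real)) \<Rightarrow> 'a set \<Rightarrow> real \<Rightarrow> bool" where
  "local_poincare M A L U \<kappa> \<longleftrightarrow>
     U \<in> sets M \<and>
     (\<forall>f\<in>A. (\<integral>x\<in>U. (f x)\<^sup>2 \<partial>M)
        \<le> \<kappa> * (\<integral>x. carre L f f x \<partial>M) + (1 / measure M U) * (\<integral>x\<in>U. f x \<partial>M)\<^sup>2)"

definition phi_lyapunov ::
  "('a \<Rightarrow> real) set \<Rightarrow> (('a \<Rightarrow> real) \<Rightarrow> ('a \<Rightarrow> real)) \<Rightarrow> (real \<Rightarrow> real) \<Rightarrow> ('a \<Rightarrow> real)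
     \<Rightarrow> 'a set \<Rightarrow> real \<Rightarrow> bool" where
  "phi_lyapunov A L \<phi> W K b \<longleftrightarrow>
     W \<in> A \<and> (\<forall>x. W x \<ge> 1) \<and>
     (\<forall>t>0. \<phi> t > 0) \<and> \<phi> C1_differentiable_on {0<..} \<and> mono_on {0<..} \<phi> \<and>
     b \<ge> 0 \<and>
     (\<forall>x. L W x \<le> - \<phi> (W x) + b * indicator K x)"

end

theory Submission imports Defs "HOL-Computational_Algebra.Polynomial" begin

fun Pp :: "real \<Rightarrow> nat \<Rightarrow> real poly" where
  "Pp e 0 = [:0,1:]"
| "Pp e (Suc n) = pderiv (Pp e n) * [:e,0,1:] - smult (2*(real n+1)) ([:0,1:] * Pp e n)"

lemma Pp_deriv:
  assumes e: "e > 0"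
  shows "((\<lambda>t. poly (Pp e n) t / (t\<^sup>2+e)^(Suc n)) has_real_derivative
          poly (Pp e (Suc n)) t / (t\<^sup>2+e)^(Suc (Suc n))) (at t)"
proof -
  have q: "t\<^sup>2 + e > 0" using e by (simp add: add_nonneg_pos)
  have d0: "((\<lambda>t. t\<^sup>2 + e) has_real_derivative 2 * t) (at t)"
    by (auto intro!: derivative_eq_intros)
  have d2: "((\<lambda>t. (t\<^sup>2 + e) ^ Suc n) has_real_derivative of_nat (Suc n) * (2 * t * (t\<^sup>2 + e) ^ n)) (at t)"
    using DERIV_power[OF d0, of "Suc n"] by simp
  have d1: "((\<lambda>t. poly (Pp e n) t) has_real_derivative poly (pderiv (Pp e n)) t) (at t)"
    by (rule poly_DERIV)
  have nz: "(t\<^sup>2 + e) ^ Suc n \<noteq> 0" using q by simp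
  have D: "((\<lambda>t. poly (Pp e n) t / (t\<^sup>2+e)^(Suc n)) has_real_derivative
     (poly (pderiv (Pp e n)) t * (t\<^sup>2+e)^(Suc n) - poly (Pp e n) t * (of_nat (Suc n) * (2 * t * (t\<^sup>2 + e) ^ n)))
       / ((t\<^sup>2+e)^(Suc n) * (t\<^sup>2+e)^(Suc n))) (at t)"
    by (rule DERIV_divide[OF d1 d2 nz])
  have "(poly (pderiv (Pp e n)) t * (t\<^sup>2+e)^(Suc n) - poly (Pp e n) t * (of_nat (Suc n) * (2 * t * (t\<^sup>2 + e) ^ n)))
       / ((t\<^sup>2+e)^(Suc n) * (t\<^sup>2+e)^(Suc n)) = poly (Pp e (Suc n)) t / (t\<^sup>2+e)^(Suc (Suc n))"
  proof -
    define Q where "Q = t\<^sup>2 + e"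
    define P where "P = poly (Pp e n) t"
    define P' where "P' = poly (pderiv (Pp e n)) t"
    have Qn: "Q ^ n \<noteq> 0" using q by (simp add: Q_def)
    have num: "P' * Q^(Suc n) - P * (of_nat (Suc n) * (2 * t * Q^n)) = Q^n * (P' * Q - 2 * (real n + 1) * t * P)"
      by (simp add: algebra_simps)
    have den: "Q^(Suc n) * Q^(Suc n) = Q^n * Q^(Suc (Suc n))"
      by (simp add: power_add[symmetric])
    have ps: "poly (Pp e (Suc n)) t = P' * Q - 2 * (real n + 1) * t * P"
      by (simp add: P_def P'_def Q_def algebra_simps power2_eq_square)
    show ?thesis unfolding Q_def[symmetric] P_def[symmetric] P'_def[symmetric] num den ps
      using Qn by simp
  qed
  with D show ?thesis by simp
qed

definition psi :: "real \<Rightarrow> real \<Rightarrow> real" where "psi e t = t / (t\<^sup>2 + e)"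

lemma smooth_psi: "e > 0 \<Longrightarrow> smooth_fun (psi e)"
  unfolding smooth_fun_def
  apply (rule exI[of _ "\<lambda>n t. poly (Pp e n) t / (t\<^sup>2+e)^(Suc n)"])
  using Pp_deriv[of e] by (auto simp: psi_def)

lemma deriv_psi: "e > 0 \<Longrightarrow> deriv (psi e) t = (e - t\<^sup>2) / (t\<^sup>2+e)\<^sup>2"
proof -
  assume e: "e > 0"
  have "(psi e) = (\<lambda>t. poly (Pp e 0) t / (t\<^sup>2+e)^(Suc 0))" by (auto simp: psi_def intro!: ext)
  hence "deriv (psi e) t = poly (Pp e 1) t / (t\<^sup>2+e)^(Suc (Suc 0))"
    using Pp_deriv[OF e, of 0 t] by (simp add: DERIV_imp_deriv)
  also have "\<dots> = (e - t\<^sup>2) / (t\<^sup>2+e)\<^sup>2" by (simp add: power2_eq_square algebra_simps pderiv_pCons)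
  finally show ?thesis .
qed


lemma carre_sym: "carre L f g = carre L g f"
  unfolding carre_def by (auto simp: mult.commute intro!: ext)

locale DS =
  fixes M :: "'a::topological_space measure" and A and L
  assumes ds: "diffusion_setting M A L"
begin

lemmas D0 = ds[unfolded diffusion_setting_def, THEN conjunct1]
lemmas D1 = ds[unfolded diffusion_setting_def, THEN conjunct2, THEN conjunct1]
lemmas D2 = ds[unfolded diffusion_setting_def, THEN conjunct2, THEN conjunct2, THEN conjunct1]
lemmas D3 = ds[unfolded diffusion_setting_def, THEN conjunct2, THEN conjunct2, THEN conjunct2, THEN conjunct1]
lemmas D4 = ds[unfolded diffusion_setting_def, THEN conjunct2, THEN conjunct2, THEN conjunct2, THEN conjunct2, THEN conjunct1]
lemmas D5 = ds[unfolded diffusion_setting_def, THEN conjunct2, THEN conjunct2, THEN conjunct2, THEN conjunct2, THEN conjunct2, THEN conjunct1]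
lemmas D6 = ds[unfolded diffusion_setting_def, THEN conjunct2, THEN conjunct2, THEN conjunct2, THEN conjunct2, THEN conjunct2, THEN conjunct2, THEN conjunct1]
lemmas D7 = ds[unfolded diffusion_setting_def, THEN conjunct2, THEN conjunct2, THEN conjunct2, THEN conjunct2, THEN conjunct2, THEN conjunct2, THEN conjunct2, THEN conjunct1]
lemmas D8 = ds[unfolded diffusion_setting_def, THEN conjunct2, THEN conjunct2, THEN conjunct2, THEN conjunct2, THEN conjunct2, THEN conjunct2, THEN conjunct2, THEN conjunct2, THEN conjunct1]
lemmas D9 = ds[unfolded diffusion_setting_def, THEN conjunct2, THEN conjunct2, THEN conjunct2, THEN conjunct2, THEN conjunct2, THEN conjunct2, THEN conjunct2, THEN conjunct2, THEN conjunct2, THEN conjunct1]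
lemmas D10 = ds[unfolded diffusion_setting_def, THEN conjunct2, THEN conjunct2, THEN conjunct2, THEN conjunct2, THEN conjunct2, THEN conjunct2, THEN conjunct2, THEN conjunct2, THEN conjunct2, THEN conjunct2, THEN conjunct1]
lemmas D11 = ds[unfolded diffusion_setting_def, THEN conjunct2, THEN conjunct2, THEN conjunct2, THEN conjunct2, THEN conjunct2, THEN conjunct2, THEN conjunct2, THEN conjunct2, THEN conjunct2, THEN conjunct2, THEN conjunct2, THEN conjunct1]
lemmas D12 = ds[unfolded diffusion_setting_def, THEN conjunct2, THEN conjunct2, THEN conjunct2, THEN conjunct2, THEN conjunct2, THEN conjunct2, THEN conjunct2, THEN conjunct2, THEN conjunct2, THEN conjunct2, THEN conjunct2, THEN conjunct2, THEN conjunct1]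
lemmas D13 = ds[unfolded diffusion_setting_def, THEN conjunct2, THEN conjunct2, THEN conjunct2, THEN conjunct2, THEN conjunct2, THEN conjunct2, THEN conjunct2, THEN conjunct2, THEN conjunct2, THEN conjunct2, THEN conjunct2, THEN conjunct2, THEN conjunct2]

lemma prob: "prob_space M" by (rule D0)
lemma constA: "(\<lambda>_. c) \<in> A" using D2 by blast
lemma addA: "f \<in> A \<Longrightarrow> g \<in> A \<Longrightarrow> (\<lambda>x. f x + g x) \<in> A" using D3 by blast
lemma mulA: "f \<in> A \<Longrightarrow> g \<in> A \<Longrightarrow> (\<lambda>x. f x * g x) \<in> A" using D3 by blast
lemma smulA: "f \<in> A \<Longrightarrow> (\<lambda>x. c * f x) \<in> A" using D4 by blast
lemma measA: "f \<in> A \<Longrightarrow> f \<in> borel_measurable M" using D5 by blast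
lemma bndA: "f \<in> A \<Longrightarrow> \<exists>B. \<forall>x. \<bar>f x\<bar> \<le> B" using D5 by blast
lemma Lmeas: "f \<in> A \<Longrightarrow> L f \<in> borel_measurable M" using D6 by blast
lemma Lint: "f \<in> A \<Longrightarrow> integrable M (L f)" using D6 by blast
lemma Ladd: "f \<in> A \<Longrightarrow> g \<in> A \<Longrightarrow> L (\<lambda>x. f x + g x) = (\<lambda>x. L f x + L g x)" using D7 by blast
lemma Lsmul: "f \<in> A \<Longrightarrow> L (\<lambda>x. c * f x) = (\<lambda>x. c * L f x)" using D8 by blast
lemma ibp: "f \<in> A \<Longrightarrow> g \<in> A \<Longrightarrow> (\<integral>x. carre L f g x \<partial>M) = - (\<integral>x. f x * L g x \<partial>M)" using D10 by blast
lemma carre_nonneg: "f \<in> A \<Longrightarrow> carre L f f x \<ge> 0" using D11 by blast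
lemma leibniz: "f \<in> A \<Longrightarrow> g \<in> A \<Longrightarrow> h \<in> A \<Longrightarrow>
        carre L (\<lambda>y. f y * g y) h x = f x * carre L g h x + g x * carre L f h x" using D12 by blast
lemma chainA: "f \<in> A \<Longrightarrow> smooth_fun \<psi> \<Longrightarrow> (\<psi> \<circ> f) \<in> A" using D13 by blast
lemma chain: "f \<in> A \<Longrightarrow> smooth_fun \<psi> \<Longrightarrow> g \<in> A \<Longrightarrow> carre L (\<psi> \<circ> f) g x = deriv \<psi> (f x) * carre L f g x"
  using D13 by blast

lemma carre_add_left:
  assumes "f \<in> A" "g \<in> A" "h \<in> A"
  shows "carre L (\<lambda>x. f x + g x) h x = carre L f h x + carre L g h x"
proof -
  have e: "(\<lambda>y. (f y + g y) * h y) = (\<lambda>y. f y * h y + g y * h y)" by (auto simp: algebra_simps)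
  show ?thesis unfolding carre_def e
    using Ladd[OF mulA[OF assms(1,3)] mulA[OF assms(2,3)]] Ladd[OF assms(1,2)]
    by (simp add: algebra_simps add_divide_distrib diff_divide_distrib)
qed

lemma carre_smul_left:
  assumes "f \<in> A" "h \<in> A"
  shows "carre L (\<lambda>x. c * f x) h x = c * carre L f h x"
proof -
  have e: "(\<lambda>y. c * f y * h y) = (\<lambda>y. c * (f y * h y))" by (auto simp: algebra_simps)
  show ?thesis unfolding carre_def e
    using Lsmul[OF mulA[OF assms(1,2)], of c] Lsmul[OF assms(1), of c]
    by (simp add: algebra_simps add_divide_distrib diff_divide_distrib)
qed

lemma carre_one:
  assumes "h \<in> A" shows "carre L (\<lambda>_. 1) h x = 0"
proof -
  have "carre L (\<lambda>y. (\<lambda>_. 1::real) y * (\<lambda>_. 1) y) h x = (\<lambda>_. 1::real) x * carre L (\<lambda>_. 1) h x + (\<lambda>_. 1::real) x * carre L (\<lambda>_. 1) h x"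
    by (rule leibniz[OF constA constA assms])
  thus ?thesis by simp
qed

lemma carre_const:
  assumes "h \<in> A" shows "carre L (\<lambda>_. c) h x = 0"
  using carre_smul_left[OF constA assms, of c "1"] carre_one[OF assms] by simp

lemma carre_quad:
  assumes u: "u \<in> A" and w: "w \<in> A"
  shows "carre L (\<lambda>y. u y + t * w y) (\<lambda>y. u y + t * w y) x
     = carre L u u x + 2 * t * carre L u w x + t\<^sup>2 * carre L w w x"
proof -
  have tw: "(\<lambda>y. t * w y) \<in> A" using smulA[OF w] .
  have v: "(\<lambda>y. u y + t * w y) \<in> A" using addA[OF u tw] .
  have "carre L (\<lambda>y. u y + t * w y) (\<lambda>y. u y + t * w y) x
     = carre L u (\<lambda>y. u y + t * w y) x + t * carre L w (\<lambda>y. u y + t * w y) x"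
    using carre_add_left[OF u tw v] carre_smul_left[OF w v] by simp
  also have "carre L u (\<lambda>y. u y + t * w y) x = carre L u u x + t * carre L u w x"
    using carre_add_left[OF u tw u] carre_smul_left[OF w u] carre_sym[of L] by metis
  also have "carre L w (\<lambda>y. u y + t * w y) x = carre L u w x + t * carre L w w x"
    using carre_add_left[OF u tw w] carre_smul_left[OF w w] carre_sym[of L] by metis
  finally show ?thesis by (simp add: algebra_simps power2_eq_square)
qed

lemma intA: "f \<in> A \<Longrightarrow> integrable M f"
proof -
  assume f: "f \<in> A"
  then obtain B where B: "\<forall>x. \<bar>f x\<bar> \<le> B" using bndA by blast
  have fm: "finite_measure M" using prob unfolding prob_space_def by blast
  have ae: "AE x in M. norm (f x) \<le> B" using B by (intro AE_I2) auto
  show ?thesis by (rule finite_measure.integrable_const_bound[OF fm ae measA[OF f]])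
qed

lemma int_bdd_mult:
  assumes f: "f \<in> A" and g: "integrable M g"
  shows "integrable M (\<lambda>x. f x * g x)"
proof -
  obtain B where B: "\<forall>x. \<bar>f x\<bar> \<le> B" using bndA[OF f] by blast
  show ?thesis
  proof (rule Bochner_Integration.integrable_bound[where f="\<lambda>x. B * \<bar>g x\<bar>"])
    show "integrable M (\<lambda>x. B * \<bar>g x\<bar>)" using g by auto
    show "(\<lambda>x. f x * g x) \<in> borel_measurable M" using measA[OF f] g by measurable
    show "AE x in M. norm (f x * g x) \<le> norm (B * \<bar>g x\<bar>)"
    proof (intro AE_I2)
      fix x
      have "\<bar>f x\<bar> * \<bar>g x\<bar> \<le> B * \<bar>g x\<bar>" using B by (simp add: mult_right_mono)
      moreover have "B \<ge> 0" using B[rule_format, of x] by linarith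
      ultimately show "norm (f x * g x) \<le> norm (B * \<bar>g x\<bar>)" by (simp add: abs_mult)
    qed
  qed
qed

lemma int_carre:
  assumes f: "f \<in> A" and g: "g \<in> A"
  shows "integrable M (carre L f g)"
proof -
  have "integrable M (\<lambda>x. (L (\<lambda>y. f y * g y) x - f x * L g x - g x * L f x) / 2)"
    using Lint[OF mulA[OF f g]] int_bdd_mult[OF f Lint[OF g]] int_bdd_mult[OF g Lint[OF f]] by auto
  thus ?thesis unfolding carre_def by (simp add: fun_eq_iff)
qed


lemma pt1_alg:
  fixes a d p f G C Gf :: real
  assumes a: "a > 0" and G: "G \<ge> 0" and dp: "a * d \<le> - p\<^sup>2"
    and q: "0 \<le> Gf + 2 * (- (f * p / a)) * C + (- (f * p / a))\<^sup>2 * G"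
  shows "f\<^sup>2 * (d * G) + p * (2 * f * C) \<le> a * Gf"
proof -
  have f1: "a * (f\<^sup>2 * d * G) \<le> - (f\<^sup>2 * p\<^sup>2 * G)"
    using mult_right_mono[OF dp, of "f\<^sup>2 * G"] G by (simp add: algebra_simps)
  have "a\<^sup>2 * (Gf + 2 * (- (f * p / a)) * C + (- (f * p / a))\<^sup>2 * G) \<ge> 0" using q by simp
  moreover have "a\<^sup>2 * (Gf + 2 * (- (f * p / a)) * C + (- (f * p / a))\<^sup>2 * G) = a\<^sup>2 * Gf - 2 * a * (f * p) * C + (f*p)\<^sup>2 * G"
    using a by (simp add: field_simps power2_eq_square)
  ultimately have f2: "0 \<le> a\<^sup>2 * Gf - 2 * a * (f * p) * C + (f*p)\<^sup>2 * G" by simp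
  have "a * (f\<^sup>2 * (d * G) + p * (2 * f * C)) \<le> a * (a * Gf)"
    using f1 f2 by (simp add: algebra_simps power2_eq_square)
  thus ?thesis using a by simp
qed


lemma delta_bound:
  assumes lyap: "phi_lyapunov A L \<phi> W K b" and KU: "K \<subseteq> U"
    and P: "local_poincare M A L U \<kappa>" and f: "f \<in> A"
    and fU: "(1 / measure M U) * (\<integral>x\<in>U. f x \<partial>M)\<^sup>2 = 0"
    and \<delta>: "0 < \<delta>" "\<delta> \<le> 1"
  shows "(\<integral>x. (f x)\<^sup>2 * (\<phi> (W x) / W x) \<partial>M)
     \<le> (1 + \<delta>/2) * ((1+\<delta>) * (\<integral>x. carre L f f x \<partial>M) + b * \<kappa> * (\<integral>x. carre L f f x \<partial>M))"
proof -
  have WA: "W \<in> A" and W1: "\<And>x. W x \<ge> 1" and \<phi>pos: "\<And>t. t > 0 \<Longrightarrow> \<phi> t > 0"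
    and C1: "\<phi> C1_differentiable_on {0<..}" and mono: "mono_on {0<..} \<phi>" and b0: "b \<ge> 0"
    and LW: "\<And>x. L W x \<le> - \<phi> (W x) + b * indicator K x"
    using lyap unfolding phi_lyapunov_def by auto
  have U: "U \<in> sets M" using P unfolding local_poincare_def by auto
  have Pf: "(\<integral>x\<in>U. (f x)\<^sup>2 \<partial>M) \<le> \<kappa> * (\<integral>x. carre L f f x \<partial>M) + (1 / measure M U) * (\<integral>x\<in>U. f x \<partial>M)\<^sup>2"
    using P f unfolding local_poincare_def by auto
  define e where "e = \<delta>/2"
  have e0: "e > 0" using \<delta> by (simp add: e_def)
  define V where "V = psi e \<circ> W"
  have VA: "V \<in> A" unfolding V_def by (rule chainA[OF WA smooth_psi[OF e0]])
  define F where "F = (\<lambda>x. f x * f x)"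
  have FA: "F \<in> A" unfolding F_def by (rule mulA[OF f f])
  define h where "h = (\<lambda>x. F x * V x)"
  have hA: "h \<in> A" unfolding h_def by (rule mulA[OF FA VA])
  have Vx: "\<And>x. V x = W x / ((W x)\<^sup>2 + e)" by (simp add: V_def psi_def)
  have V0: "\<And>x. V x \<ge> 0"
  proof -
    fix x
    have "(W x)\<^sup>2 + e > 0" using e0 by (simp add: add_nonneg_pos)
    moreover have "W x \<ge> 0" using W1[of x] by linarith
    ultimately show "V x \<ge> 0" unfolding Vx by simp
  qed
  have V1: "\<And>x. V x \<le> 1"
  proof -
    fix x
    have "W x * 1 \<le> W x * W x" using W1[of x] by (intro mult_left_mono) auto
    hence "W x \<le> (W x)\<^sup>2 + e" using e0 by (simp add: power2_eq_square)
    moreover have "(W x)\<^sup>2 + e > 0" using e0 by (simp add: add_nonneg_pos)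
    ultimately show "V x \<le> 1" unfolding Vx by simp
  qed
  have ch: "\<And>x. carre L h W x \<le> (1+\<delta>) * carre L f f x"
  proof -
    fix x
    define w where "w = W x"
    define p where "p = w / (w\<^sup>2 + e)"
    define d where "d = (e - w\<^sup>2) / (w\<^sup>2 + e)\<^sup>2"
    have w1: "w \<ge> 1" using W1 by (simp add: w_def)
    have qpos: "w\<^sup>2 + e > 0" using e0 by (simp add: add_nonneg_pos)
    have cV: "carre L V W x = d * carre L W W x"
      unfolding V_def using chain[OF WA smooth_psi[OF e0] WA] deriv_psi[OF e0] by (simp add: d_def w_def)
    have cF: "carre L F W x = 2 * f x * carre L f W x"
      unfolding F_def using leibniz[OF f f WA, of x] by simp
    have chx: "carre L h W x = (f x)\<^sup>2 * (d * carre L W W x) + p * (2 * f x * carre L f W x)"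
      unfolding h_def using leibniz[OF FA VA WA, of x] cV cF
      by (simp add: F_def Vx p_def w_def power2_eq_square)
    have w2: "w\<^sup>2 \<ge> 1" using w1 by (simp add: one_le_power)
    have "(e - w\<^sup>2) * (1+\<delta>) \<le> - p\<^sup>2 * (w\<^sup>2 + e)\<^sup>2"
    proof -
      have "p\<^sup>2 * (w\<^sup>2 + e)\<^sup>2 = w\<^sup>2" using qpos by (simp add: p_def power_divide)
      moreover have "e * (1+\<delta>) \<le> \<delta> * w\<^sup>2"
      proof -
        have "\<delta> * \<delta> \<le> \<delta> * 1" using \<delta> by (intro mult_left_mono) auto
        hence "e * (1+\<delta>) \<le> \<delta>" by (simp add: e_def algebra_simps)
        also have "\<delta> \<le> \<delta> * w\<^sup>2" using \<delta> w2 by simp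
        finally show ?thesis .
      qed
      ultimately show ?thesis by (simp add: algebra_simps)
    qed
    hence dp: "(1+\<delta>) * d \<le> - p\<^sup>2"
      using qpos unfolding d_def by (simp add: field_simps)
    define t where "t = - (f x * p / (1+\<delta>))"
    have tA: "(\<lambda>y. f y + t * W y) \<in> A" by (rule addA[OF f smulA[OF WA]])
    have q: "0 \<le> carre L f f x + 2 * t * carre L f W x + t\<^sup>2 * carre L W W x"
      using carre_nonneg[OF tA, of x] carre_quad[OF f WA, of t x] by simp
    show "carre L h W x \<le> (1+\<delta>) * carre L f f x"
      unfolding chx
      by (rule pt1_alg[where a="1+\<delta>"]) (use \<delta> carre_nonneg[OF WA, of x] dp q in \<open>simp_all add: t_def\<close>)
  qed
  obtain BW where BW: "\<And>x. \<bar>W x\<bar> \<le> BW" using bndA[OF WA] by blast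
  obtain Bf where Bf: "\<And>x. \<bar>f x\<bar> \<le> Bf" using bndA[OF f] by blast
  have Wm[measurable]: "W \<in> borel_measurable M" by (rule measA[OF WA])
  have fm[measurable]: "f \<in> borel_measurable M" by (rule measA[OF f])
  have Vm[measurable]: "V \<in> borel_measurable M" by (rule measA[OF VA])
  have LWm[measurable]: "L W \<in> borel_measurable M" by (rule Lmeas[OF WA])
  have cont: "continuous_on {0<..} \<phi>" by (rule C1_differentiable_imp_continuous_on[OF C1])
  have cont1: "continuous_on UNIV (\<lambda>t. \<phi> (max t 1))"
    by (rule continuous_on_compose2[OF cont]) (auto intro!: continuous_intros)
  have "(\<lambda>x. \<phi> (max (W x) 1)) \<in> borel_measurable M"
    by (rule borel_measurable_continuous_on[OF cont1 Wm])
  moreover have "(\<lambda>x. \<phi> (max (W x) 1)) = (\<lambda>x. \<phi> (W x))" using W1 by (simp add: max_absorb1)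
  ultimately have \<phi>m[measurable]: "(\<lambda>x. \<phi> (W x)) \<in> borel_measurable M" by simp
  have \<phi>0: "\<And>x. \<phi> (W x) > 0" using \<phi>pos W1 by (meson less_le_trans zero_less_one)
  have \<phi>B: "\<And>x. \<phi> (W x) \<le> \<phi> BW"
  proof -
    fix x show "\<phi> (W x) \<le> \<phi> BW"
      using mono W1[of x] BW[of x] by (intro mono_onD[OF mono]) auto
  qed
  have Fint: "integrable M (\<lambda>x. (f x)\<^sup>2)" using intA[OF FA] by (simp add: F_def power2_eq_square)
  have domint: "integrable M (\<lambda>x. (f x)\<^sup>2 * \<phi> BW)" using Fint by simp
  have iX: "integrable M (\<lambda>x. (f x)\<^sup>2 * (\<phi> (W x) / W x))"
  proof (rule Bochner_Integration.integrable_bound[OF domint])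
    show "(\<lambda>x. (f x)\<^sup>2 * (\<phi> (W x) / W x)) \<in> borel_measurable M" by measurable
    show "AE x in M. norm ((f x)\<^sup>2 * (\<phi> (W x) / W x)) \<le> norm ((f x)\<^sup>2 * \<phi> BW)"
    proof (intro AE_I2)
      fix x
      have "\<phi> (W x) / W x \<le> \<phi> (W x)" using W1[of x] \<phi>0[of x]
        by (simp add: divide_le_eq)
      hence "\<phi> (W x) / W x \<le> \<phi> BW" using \<phi>B[of x] by linarith
      moreover have "\<phi> (W x) / W x \<ge> 0" using W1[of x] \<phi>0[of x] by simp
      ultimately have "(f x)\<^sup>2 * (\<phi> (W x) / W x) \<le> (f x)\<^sup>2 * \<phi> BW" "0 \<le> (f x)\<^sup>2 * (\<phi> (W x) / W x)"
        by (metis mult_left_mono zero_le_power2, metis mult_nonneg_nonneg zero_le_power2)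
      moreover have "0 \<le> (f x)\<^sup>2 * \<phi> BW" using \<phi>0[of x] \<phi>B[of x] by simp
      ultimately show "norm ((f x)\<^sup>2 * (\<phi> (W x) / W x)) \<le> norm ((f x)\<^sup>2 * \<phi> BW)"
        by (simp only: real_norm_def abs_of_nonneg)
    qed
  qed
  have iY: "integrable M (\<lambda>x. (f x)\<^sup>2 * V x * \<phi> (W x))"
  proof (rule Bochner_Integration.integrable_bound[OF domint])
    show "(\<lambda>x. (f x)\<^sup>2 * V x * \<phi> (W x)) \<in> borel_measurable M" by measurable
    show "AE x in M. norm ((f x)\<^sup>2 * V x * \<phi> (W x)) \<le> norm ((f x)\<^sup>2 * \<phi> BW)"
    proof (intro AE_I2)
      fix x
      have "V x * \<phi> (W x) \<le> 1 * \<phi> BW" using V0[of x] V1[of x] \<phi>0[of x] \<phi>B[of x]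
        by (intro mult_mono) auto
      moreover have "V x * \<phi> (W x) \<ge> 0" using V0[of x] \<phi>0[of x] by simp
      ultimately show "norm ((f x)\<^sup>2 * V x * \<phi> (W x)) \<le> norm ((f x)\<^sup>2 * \<phi> BW)"
        by (simp add: abs_mult mult_left_mono mult.assoc)
    qed
  qed
  have ihL: "integrable M (\<lambda>x. h x * L W x)" by (rule int_bdd_mult[OF hA Lint[OF WA]])
  have iU: "integrable M (\<lambda>x. indicator U x * (f x)\<^sup>2)"
    using integrable_mult_indicator[OF U Fint] by simp
  have iR: "integrable M (\<lambda>x. - (h x * L W x) + b * (indicator U x * (f x)\<^sup>2))"
    using ihL iU by simp
  have pt2: "\<And>x. (f x)\<^sup>2 * V x * \<phi> (W x) \<le> - (h x * L W x) + b * (indicator U x * (f x)\<^sup>2)"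
  proof -
    fix x
    have hx: "h x = (f x)\<^sup>2 * V x" by (simp add: h_def F_def power2_eq_square)
    have h0: "h x \<ge> 0" "h x \<le> (f x)\<^sup>2" using V0[of x] V1[of x] unfolding hx
      by (auto intro: mult_left_le)
    have "h x * L W x \<le> h x * (- \<phi> (W x) + b * indicator K x)"
      using mult_left_mono[OF LW h0(1)] .
    moreover have "h x * (b * indicator K x) \<le> (f x)\<^sup>2 * (b * indicator U x)"
      using h0 b0 KU by (intro mult_mono) (auto simp: indicator_def)
    ultimately show "(f x)\<^sup>2 * V x * \<phi> (W x) \<le> - (h x * L W x) + b * (indicator U x * (f x)\<^sup>2)"
      unfolding hx by (simp add: algebra_simps)
  qed
  have pt3: "\<And>x. (f x)\<^sup>2 * (\<phi> (W x) / W x) \<le> (1 + e) * ((f x)\<^sup>2 * V x * \<phi> (W x))"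
  proof -
    fix x
    have q: "(W x)\<^sup>2 + e > 0" using e0 by (simp add: add_nonneg_pos)
    have w0: "W x > 0" using W1[of x] by linarith
    have "e * 1 \<le> e * (W x)\<^sup>2" using e0 W1[of x] by (intro mult_left_mono) (auto simp: one_le_power)
    hence "1 / W x \<le> (1 + e) * V x" unfolding Vx using q w0
      by (simp add: field_simps power2_eq_square)
    hence "(f x)\<^sup>2 * \<phi> (W x) * (1 / W x) \<le> (f x)\<^sup>2 * \<phi> (W x) * ((1 + e) * V x)"
      using \<phi>0[of x] by (intro mult_left_mono) auto
    thus "(f x)\<^sup>2 * (\<phi> (W x) / W x) \<le> (1 + e) * ((f x)\<^sup>2 * V x * \<phi> (W x))"
      by (simp add: algebra_simps)
  qed
  define G where "G = (\<integral>x. carre L f f x \<partial>M)"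
  have SU: "(\<integral>x\<in>U. (f x)\<^sup>2 \<partial>M) = (\<integral>x. indicator U x * (f x)\<^sup>2 \<partial>M)"
    by (simp add: set_lebesgue_integral_def)
  have s1: "(\<integral>x. (f x)\<^sup>2 * (\<phi> (W x) / W x) \<partial>M) \<le> (1 + e) * (\<integral>x. (f x)\<^sup>2 * V x * \<phi> (W x) \<partial>M)"
  proof -
    have "(\<integral>x. (f x)\<^sup>2 * (\<phi> (W x) / W x) \<partial>M) \<le> (\<integral>x. (1 + e) * ((f x)\<^sup>2 * V x * \<phi> (W x)) \<partial>M)"
      by (rule integral_mono[OF iX _ pt3]) (use iY in simp)
    thus ?thesis by simp
  qed
  have s2: "(\<integral>x. (f x)\<^sup>2 * V x * \<phi> (W x) \<partial>M) \<le> (\<integral>x. - (h x * L W x) + b * (indicator U x * (f x)\<^sup>2) \<partial>M)"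
    by (rule integral_mono[OF iY iR pt2])
  have s2': "(\<integral>x. - (h x * L W x) + b * (indicator U x * (f x)\<^sup>2) \<partial>M) = - (\<integral>x. h x * L W x \<partial>M) + b * (\<integral>x. indicator U x * (f x)\<^sup>2 \<partial>M)"
    using ihL iU by simp
  have s3: "- (\<integral>x. h x * L W x \<partial>M) = (\<integral>x. carre L h W x \<partial>M)" using ibp[OF hA WA] by simp
  have s4: "(\<integral>x. carre L h W x \<partial>M) \<le> (1+\<delta>) * G"
  proof -
    have "(\<integral>x. carre L h W x \<partial>M) \<le> (\<integral>x. (1+\<delta>) * carre L f f x \<partial>M)"
      by (rule integral_mono[OF int_carre[OF hA WA] _ ch]) (use int_carre[OF f f] in simp)
    thus ?thesis by (simp add: G_def)
  qed
  have s5: "(\<integral>x. indicator U x * (f x)\<^sup>2 \<partial>M) \<le> \<kappa> * G" using Pf[unfolded fU SU] by (simp add: G_def)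
  have s6: "b * (\<integral>x. indicator U x * (f x)\<^sup>2 \<partial>M) \<le> b * (\<kappa> * G)" by (rule mult_left_mono[OF s5 b0])
  have s7: "(\<integral>x. (f x)\<^sup>2 * V x * \<phi> (W x) \<partial>M) \<le> (1+\<delta>) * G + b * \<kappa> * G"
    using s2 s2' s3 s4 s6 by (simp only: mult.assoc)
  have s8: "(1 + e) * (\<integral>x. (f x)\<^sup>2 * V x * \<phi> (W x) \<partial>M) \<le> (1 + e) * ((1+\<delta>) * G + b * \<kappa> * G)"
    by (rule mult_left_mono[OF s7]) (use e0 in simp)
  show ?thesis using s1 s8 unfolding G_def e_def by linarith
qed

end

theorem mainTheorem8:
  fixes M :: "'a::polish_space measure"
    and A :: "('a \<Rightarrow> real) set"
    and L :: "('a \<Rightarrow> real) \<Rightarrow> ('a \<Rightarrow> real)"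
    and \<phi> :: "real \<Rightarrow> real" and W g :: "'a \<Rightarrow> real"
    and K U :: "'a set" and b \<kappa> :: real
  assumes "diffusion_setting M A L"
    and "phi_lyapunov A L \<phi> W K b"
    and "K \<subseteq> U"
    and "local_poincare M A L U \<kappa>"
    and "g \<in> A"
  shows "(INF c::real. (\<integral>x. (g x - c)\<^sup>2 * (\<phi> (W x) / W x) \<partial>M))
           \<le> (1 + b * \<kappa>) * (\<integral>x. carre L g g x \<partial>M)"
proof -
  interpret DS M A L by unfold_locales (rule assms(1))
  have gA: "g \<in> A" by fact
  have U: "U \<in> sets M" using assms(4) unfolding local_poincare_def by auto
  have W1: "\<And>x. W x \<ge> 1" and \<phi>pos: "\<And>t. t > 0 \<Longrightarrow> \<phi> t > 0"
    using assms(2) unfolding phi_lyapunov_def by auto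
  define c0 where "c0 = (\<integral>x\<in>U. g x \<partial>M) / measure M U"
  define f where "f = (\<lambda>x. g x + (\<lambda>_. - c0) x)"
  have fA: "f \<in> A" unfolding f_def by (rule addA[OF gA constA])
  have fx: "\<And>x. f x = g x - c0" by (simp add: f_def)
  have Gf: "\<And>x. carre L f f x = carre L g g x"
  proof -
    fix x
    have "carre L f f x = carre L g f x" unfolding f_def
      using carre_add_left[OF gA constA fA, of "-c0" x] carre_const[OF fA, of "-c0" x] by (simp add: f_def)
    also have "\<dots> = carre L f g x" by (simp add: carre_sym[of L g f])
    also have "\<dots> = carre L g g x" unfolding f_def
      using carre_add_left[OF gA constA gA, of "-c0" x] carre_const[OF gA, of "-c0" x] by simp
    finally show "carre L f f x = carre L g g x" .
  qed
  have fU: "(1 / measure M U) * (\<integral>x\<in>U. f x \<partial>M)\<^sup>2 = 0"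
  proof (cases "measure M U = 0")
    case True thus ?thesis by simp
  next
    case False
    have ig: "integrable M (\<lambda>x. indicator U x * g x)"
      using integrable_mult_indicator[OF U intA[OF gA]] by simp
    have ii: "integrable M (\<lambda>x. indicator U x * c0)"
      using integrable_real_mult_indicator[OF U intA[OF constA[of c0]]] by (simp add: mult.commute)
    have "(\<integral>x\<in>U. f x \<partial>M) = (\<integral>x. indicator U x * g x - indicator U x * c0 \<partial>M)"
      unfolding set_lebesgue_integral_def fx by (simp add: algebra_simps)
    also have "\<dots> = (\<integral>x\<in>U. g x \<partial>M) - c0 * measure M U"
      using ig ii U by (simp add: set_lebesgue_integral_def sets.Int_space_eq2 mult.commute)
    also have "\<dots> = 0" using False by (simp add: c0_def)
    finally show ?thesis by simp
  qed
  define Y where "Y = (\<integral>x. carre L g g x \<partial>M)"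
  define X where "X = (\<integral>x. (g x - c0)\<^sup>2 * (\<phi> (W x) / W x) \<partial>M)"
  have bnd: "\<And>\<delta>. 0 < \<delta> \<Longrightarrow> \<delta> \<le> 1 \<Longrightarrow> X \<le> (1 + \<delta>/2) * ((1+\<delta>) * Y + b * \<kappa> * Y)"
  proof -
    fix \<delta> :: real assume d: "0 < \<delta>" "\<delta> \<le> 1"
    have Gfe: "carre L f f = carre L g g" by (rule ext) (rule Gf)
    have fe: "\<And>x. (f x)\<^sup>2 = (g x - c0)\<^sup>2" by (simp add: fx)
    show "X \<le> (1 + \<delta>/2) * ((1+\<delta>) * Y + b * \<kappa> * Y)"
      using delta_bound[OF assms(2,3,4) fA fU d, unfolded Gfe fe] by (simp only: X_def Y_def)
  qed
  have lim: "((\<lambda>\<delta>. (1 + \<delta>/2) * ((1+\<delta>) * Y + b * \<kappa> * Y)) \<longlongrightarrow> (1 + 0/2) * ((1+0) * Y + b * \<kappa> * Y)) (at_right 0)"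
    by (intro tendsto_intros) auto
  have ev: "eventually (\<lambda>\<delta>. X \<le> (1 + \<delta>/2) * ((1+\<delta>) * Y + b * \<kappa> * Y)) (at_right (0::real))"
  proof -
    have "eventually (\<lambda>x. x \<in> {0<..<1}) (at_right (0::real))" by (rule eventually_at_right_real) simp
    thus ?thesis by eventually_elim (auto intro: bnd)
  qed
  have XY: "X \<le> (1 + b * \<kappa>) * Y"
    using tendsto_le[OF trivial_limit_at_right_real lim tendsto_const ev] by (simp add: algebra_simps)
  have nn: "\<And>c. 0 \<le> (\<integral>x. (g x - c)\<^sup>2 * (\<phi> (W x) / W x) \<partial>M)"
  proof -
    fix c
    have "\<And>x. 0 \<le> (g x - c)\<^sup>2 * (\<phi> (W x) / W x)"
    proof -
      fix x
      have "W x > 0" using W1[of x] by linarith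
      thus "0 \<le> (g x - c)\<^sup>2 * (\<phi> (W x) / W x)" using \<phi>pos[of "W x"] by simp
    qed
    thus "0 \<le> (\<integral>x. (g x - c)\<^sup>2 * (\<phi> (W x) / W x) \<partial>M)" by (intro integral_nonneg_AE) auto
  qed
  have "(INF c::real. (\<integral>x. (g x - c)\<^sup>2 * (\<phi> (W x) / W x) \<partial>M)) \<le> X"
  proof -
    have bb: "bdd_below (range (\<lambda>c::real. (\<integral>x. (g x - c)\<^sup>2 * (\<phi> (W x) / W x) \<partial>M)))"
    proof (rule bdd_belowI[where m=0])
      fix y assume "y \<in> range (\<lambda>c::real. (\<integral>x. (g x - c)\<^sup>2 * (\<phi> (W x) / W x) \<partial>M))"
      then obtain c where "y = (\<integral>x. (g x - c)\<^sup>2 * (\<phi> (W x) / W x) \<partial>M)" by blast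
      thus "0 \<le> y" using nn[of c] by simp
    qed
    show ?thesis unfolding X_def by (rule cINF_lower[OF bb]) simp
  qed
  from order_trans[OF this XY] show ?thesis unfolding Y_def .
qed

end
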